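(* For any $n$-agent rank-based auction with (non-constant) allocation rule $x$ and any $k\in\{1,\dots,n-1\}$, the function $Z_k(q)=(1-q)\,x_k'(q)/x'(q)$ achieves a single local maximum for $q\in[0,1]$.
   Context: For $k\in\{1,\dots,n-1\}$ the $k$-highest-bids-win allocation rule in quantile space is $x_k(q)=\sum_{i=0}^{k-1}\binom{n-1}{i}q^{n-1-i}(1-q)^i$, with derivative $x_k'(q)=(n-1)\binom{n-2}{k-1}q^{n-k-1}(1-q)^{k-1}$; $x_0\equiv 0$, $x_n\equiv 1$. A rank-based auction with position weights $1\ge w_1\ge\cdots\ge w_n\ge 0$ (and $w_{n+1}:=0$) has allocation rule $x(q)=\sum_{k=1}^{n}(w_k-w_{k+1})x_k(q)$. *)

theory Defs
  imports "HOL-Analysis.Analysis"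
begin

text \<open>k-highest-bids-win allocation rule in quantile space (n agents).
  For k = 0 the sum is empty (x_0 = 0); for k = n it equals 1 (x_n = 1).\<close>
definition xk :: "nat \<Rightarrow> nat \<Rightarrow> real \<Rightarrow> real" where
  "xk n k q = (\<Sum>i<k. real ((n - 1) choose i) * q ^ (n - 1 - i) * (1 - q) ^ i)"

text \<open>Rank-based auction allocation rule with position weights w 1, ..., w n,
  using the convention w (n+1) = 0.\<close>
definition alloc :: "nat \<Rightarrow> (nat \<Rightarrow> real) \<Rightarrow> real \<Rightarrow> real" where
  "alloc n w q = (\<Sum>k\<in>{1..n}. (w k - (if k < n then w (Suc k) else 0)) * xk n k q)"

definition Zk :: "nat \<Rightarrow> (nat \<Rightarrow> real) \<Rightarrow> nat \<Rightarrow> real \<Rightarrow> real" where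
  "Zk n w k q = (1 - q) * deriv (xk n k) q / deriv (alloc n w) q"

end

theory Submission
  imports Defs
begin


definition T :: "nat \<Rightarrow> nat \<Rightarrow> real \<Rightarrow> real" where
  "T p j q = real (p choose j) * q^(p-j) * (1-q)^j"

lemma term_deriv:
  "((\<lambda>q. real (Suc p choose i) * q^(Suc p - i) * (1-q)^i) has_real_derivative
     real (Suc p) * (T p i q - (if i = 0 then 0 else T p (i-1) q))) (at q)"
proof -
  have D: "((\<lambda>q. real (Suc p choose i) * q^(Suc p - i) * (1-q)^i) has_real_derivative
     real (Suc p choose i) * (real (Suc p - i) * q^(Suc p - i - 1) * (1-q)^i
        - q^(Suc p - i) * (real i * (1-q)^(i-1)))) (at q)"
    by (auto intro!: derivative_eq_intros simp: algebra_simps)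
  have E: "real (Suc p choose i) * (real (Suc p - i) * q^(Suc p - i - 1) * (1-q)^i
        - q^(Suc p - i) * (real i * (1-q)^(i-1))) = 
     real (Suc p) * (T p i q - (if i = 0 then 0 else T p (i-1) q))"
  proof (cases "i \<le> Suc p")
    case False
    then have z: "Suc p choose i = 0" "p choose i = 0" "p choose (i-1) = 0" by auto
    show ?thesis unfolding T_def z by simp
  next
    case True
    show ?thesis
    proof (cases i)
      case 0
      then show ?thesis by (simp add: T_def)
    next
      case (Suc j)
      then have jp: "j \<le> p" using True by simp
      have n1: "(Suc p choose Suc j) * (p - j) = Suc p * (p choose Suc j)"
        using binomial_absorb_comp[of "Suc p" "Suc j"] by (simp only: mult.commute diff_Suc_Suc diff_Suc_1)
      have c1: "real (Suc p choose Suc j) * real (p - j) = real (Suc p) * real (p choose Suc j)"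
        by (metis n1 of_nat_mult)
      have n2: "(Suc p choose Suc j) * Suc j = Suc p * (p choose j)"
        using Suc_times_binomial_eq[of p j] by simp
      have c2: "real (Suc p choose Suc j) * real (Suc j) = real (Suc p) * real (p choose j)"
        by (metis n2 of_nat_mult)
      show ?thesis
      proof (cases "j = p")
        case True
        then show ?thesis using Suc by (simp add: T_def c2[unfolded True] binomial_eq_0)
      next
        case False
        then have jp': "j < p" using jp by simp
        have e1: "Suc p - Suc j - 1 = p - Suc j" by simp
        have e2: "Suc p - Suc j = p - j" by simp
        define C where "C = real (Suc p choose Suc j)"
        define c1' where "c1' = real (p choose Suc j)"
        define c0 where "c0 = real (p choose j)"
        have c1'': "C * real (p - j) = real (Suc p) * c1'" using c1 by (simp add: C_def c1'_def)
        have c2'': "C * real (Suc j) = real (Suc p) * c0" using c2 by (simp add: C_def c0_def)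
        have L: "C * (real (p - j) * X - Y * real (Suc j)) = real (Suc p) * (c1' * X - c0 * Y)" for X Y
        proof -
          have "C * (real (p - j) * X - Y * real (Suc j)) = (C * real (p - j)) * X - (C * real (Suc j)) * Y"
            by (simp add: algebra_simps)
          also have "\<dots> = real (Suc p) * (c1' * X - c0 * Y)" unfolding c1'' c2'' by (simp add: algebra_simps)
          finally show ?thesis .
        qed
        show ?thesis
          unfolding Suc T_def e1 e2 diff_Suc_1 C_def[symmetric] c1'_def[symmetric] c0_def[symmetric]
          using L[of "q^(p - Suc j) * (1-q)^(Suc j)" "q^(p-j) * (1-q)^j"]
          by (simp add: mult_ac)
      qed
    qed
  qed
  show ?thesis using D E by simp
qed


lemma xk_deriv:
  "(xk (Suc (Suc p)) k has_real_derivative real (Suc p) * (if k = 0 then 0 else T p (k-1) q)) (at q)"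
proof (induction k)
  case 0
  have "xk (Suc (Suc p)) 0 = (\<lambda>q. 0)" by (auto simp: xk_def)
  then show ?case by simp
next
  case (Suc k)
  have e: "xk (Suc (Suc p)) (Suc k) = (\<lambda>q. xk (Suc (Suc p)) k q +
      real (Suc p choose k) * q^(Suc p - k) * (1-q)^k)"
    by (auto simp: xk_def)
  have "((\<lambda>q. xk (Suc (Suc p)) k q +
      real (Suc p choose k) * q^(Suc p - k) * (1-q)^k) has_real_derivative
      real (Suc p) * (if k = 0 then 0 else T p (k-1) q) +
      real (Suc p) * (T p k q - (if k = 0 then 0 else T p (k-1) q))) (at q)"
    by (rule DERIV_add[OF Suc.IH term_deriv])
  then show ?case unfolding e by (simp add: algebra_simps)
qed

lemma deriv_xk:
  "deriv (xk (Suc (Suc p)) k) q = real (Suc p) * (if k = 0 then 0 else T p (k-1) q)"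
  by (rule DERIV_imp_deriv[OF xk_deriv])

definition dd :: "nat \<Rightarrow> (nat \<Rightarrow> real) \<Rightarrow> nat \<Rightarrow> real" where
  "dd n w j = w j - (if j < n then w (Suc j) else 0)"

lemma alloc_deriv:
  "(alloc (Suc (Suc p)) w has_real_derivative
     (\<Sum>j\<in>{1..Suc (Suc p)}. dd (Suc (Suc p)) w j * (real (Suc p) * T p (j-1) q))) (at q)"
proof -
  have e: "alloc (Suc (Suc p)) w = (\<lambda>q. \<Sum>j\<in>{1..Suc (Suc p)}. dd (Suc (Suc p)) w j * xk (Suc (Suc p)) j q)"
    by (auto simp: alloc_def dd_def)
  show ?thesis unfolding e
    apply (rule DERIV_sum)
    apply (rule DERIV_cmult)
    using xk_deriv[of p _ q] by (metis not_one_le_zero atLeastAtMost_iff)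
qed

lemma deriv_alloc:
  "deriv (alloc (Suc (Suc p)) w) q =
     (\<Sum>j\<in>{1..Suc (Suc p)}. dd (Suc (Suc p)) w j * (real (Suc p) * T p (j-1) q))"
  by (rule DERIV_imp_deriv[OF alloc_deriv])

lemma xk_top: "xk (Suc (Suc p)) (Suc (Suc p)) q = 1"
proof -
  have "1 = ((1-q) + q) ^ Suc p" by simp
  also have "\<dots> = (\<Sum>i\<le>Suc p. real (Suc p choose i) * (1-q)^i * q^(Suc p - i))"
    by (rule binomial_ring)
  also have "\<dots> = xk (Suc (Suc p)) (Suc (Suc p)) q"
    unfolding xk_def by (simp add: lessThan_Suc_atMost mult_ac)
  finally show ?thesis by simp
qed

lemma mono_term:
  fixes s u v :: real
  assumes "u < v"
  shows "s * exp (s * u) \<le> s * exp (s * v)" and "s \<noteq> 0 \<Longrightarrow> s * exp (s * u) < s * exp (s * v)"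
proof -
  have "s \<noteq> 0 \<Longrightarrow> s * exp (s * u) < s * exp (s * v)"
  proof -
    assume "s \<noteq> 0"
    then consider "s > 0" | "s < 0" by linarith
    then show ?thesis
    proof cases
      case 1
      then have "s * u < s * v" using assms by simp
      then show ?thesis using 1 by simp
    next
      case 2
      then have "s * v < s * u" using assms by (simp add: mult_less_cancel_left)
      then have "exp (s * v) < exp (s * u)" by simp
      then show ?thesis using 2 by (simp add: mult_less_cancel_left)
    qed
  qed
  then show "s * exp (s * u) \<le> s * exp (s * v)" "s \<noteq> 0 \<Longrightarrow> s * exp (s * u) < s * exp (s * v)"
    by (cases "s = 0", auto intro: less_imp_le)
qed



lemma alg:
  fixes q x :: real and a b p :: nat
  assumes q: "0 < q" "q < 1" and ab: "a \<le> p" "b \<le> p"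
  and x: "x = q / (1-q)"
  shows "(1-q) * (real (p choose a) * q^(p-a) * (1-q)^a) * (D * real (p choose b) * (x^a / x^b + x^(Suc a) / x^b))
     = real (p choose a) * (D * (real (p choose b) * q^(p-b) * (1-q)^b))"
proof -
  have q1: "1 - q \<noteq> 0" "q \<noteq> 0" using q by auto
  have pa: "q^(p-a) = q^p / q^a" "q^(p-b) = q^p / q^b" using ab q1 by (simp_all add: power_diff)
  have "x^a / x^b + x^(Suc a) / x^b = x^a / x^b / (1-q)" using q1 unfolding x by (simp add: field_simps)
  then show ?thesis unfolding pa using q1 unfolding x by (simp add: field_simps power_divide)
qed



definition cc :: "nat \<Rightarrow> nat \<Rightarrow> (nat \<Rightarrow> real) \<Rightarrow> nat \<Rightarrow> real" where
  "cc p n w j = dd n w j * real (p choose (j - 1))"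

definition HH :: "nat \<Rightarrow> nat \<Rightarrow> (nat \<Rightarrow> real) \<Rightarrow> nat \<Rightarrow> real \<Rightarrow> real" where
  "HH p n w k u = (\<Sum>j\<in>{1..n}. cc p n w j *
      (exp ((real k - real j) * u) + exp ((real k - real j + 1) * u)))"

definition HD :: "nat \<Rightarrow> nat \<Rightarrow> (nat \<Rightarrow> real) \<Rightarrow> nat \<Rightarrow> real \<Rightarrow> real" where
  "HD p n w k u = (\<Sum>j\<in>{1..n}. cc p n w j *
      ((real k - real j) * exp ((real k - real j) * u) + (real k - real j + 1) * exp ((real k - real j + 1) * u)))"

lemma HH_deriv: "(HH p n w k has_real_derivative HD p n w k u) (at u)"
proof -
  have e: "HH p n w k = (\<lambda>u. \<Sum>j\<in>{1..n}. cc p n w j *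
      (exp ((real k - real j) * u) + exp ((real k - real j + 1) * u)))"
    by (auto simp: HH_def)
  show ?thesis unfolding e HD_def
    by (auto intro!: derivative_eq_intros simp: algebra_simps)
qed

lemma HD_mono:
  assumes nn: "\<And>j. j \<in> {1..n} \<Longrightarrow> 0 \<le> cc p n w j"
    and ex: "j0 \<in> {1..n}" "0 < cc p n w j0"
    and uv: "u < v"
  shows "HD p n w k u < HD p n w k v"
  unfolding HD_def
proof (rule sum_strict_mono_ex1)
  show "finite {1..n}" by simp
  have t: "s * exp (s * u) + (s+1) * exp ((s+1) * u) \<le> s * exp (s * v) + (s+1) * exp ((s+1) * v)" for s
    using mono_term(1)[OF uv, of s] mono_term(1)[OF uv, of "s+1"] by linarith
  have t2: "s * exp (s * u) + (s+1) * exp ((s+1) * u) < s * exp (s * v) + (s+1) * exp ((s+1) * v)" for s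
  proof (cases "s = 0")
    case True
    then show ?thesis using mono_term(2)[OF uv, of "s+1"] by simp
  next
    case False
    then show ?thesis using mono_term(2)[OF uv, of s] mono_term(1)[OF uv, of "s+1"] by linarith
  qed
  show "\<forall>j\<in>{1..n}. cc p n w j * ((real k - real j) * exp ((real k - real j) * u) + (real k - real j + 1) * exp ((real k - real j + 1) * u))
      \<le> cc p n w j * ((real k - real j) * exp ((real k - real j) * v) + (real k - real j + 1) * exp ((real k - real j + 1) * v))"
    using nn t by (auto intro: mult_left_mono)
  show "\<exists>j\<in>{1..n}. cc p n w j * ((real k - real j) * exp ((real k - real j) * u) + (real k - real j + 1) * exp ((real k - real j + 1) * u))
      < cc p n w j * ((real k - real j) * exp ((real k - real j) * v) + (real k - real j + 1) * exp ((real k - real j + 1) * v))"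
    using ex t2 by (auto intro!: bexI[of _ j0])
qed

lemma HH_pos:
  assumes nn: "\<And>j. j \<in> {1..n} \<Longrightarrow> 0 \<le> cc p n w j"
    and ex: "j0 \<in> {1..n}" "0 < cc p n w j0"
  shows "0 < HH p n w k u"
  unfolding HH_def
  apply (rule sum_pos2[OF _ ex(1)])
  using ex nn by (auto intro!: mult_pos_pos add_pos_pos mult_nonneg_nonneg add_nonneg_nonneg)

lemma identity:
  fixes q :: real
  assumes q: "0 < q" "q < 1" and ap: "a \<le> p"
  shows "(1-q) * T p a q * HH p (Suc (Suc p)) w (Suc a) (ln (q/(1-q)))
     = real (p choose a) * (\<Sum>j\<in>{1..Suc (Suc p)}. dd (Suc (Suc p)) w j * T p (j-1) q)"
proof -
  define x where "x = q / (1-q)"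
  have xpos: "x > 0" using q by (simp add: x_def)
  have ex: "exp ((real (Suc a) - real j) * ln x) = x^a / x^(j-1)"
           "exp ((real (Suc a) - real j + 1) * ln x) = x^(Suc a) / x^(j-1)" if "j \<ge> 1" for j
  proof -
    have r: "real (Suc a) - real j = real a - real (j-1)" "real (Suc a) - real j + 1 = real (Suc a) - real (j-1)"
      using that by (auto simp: of_nat_diff)
    show "exp ((real (Suc a) - real j) * ln x) = x^a / x^(j-1)"
      unfolding r(1) left_diff_distrib exp_diff exp_of_nat_mult using xpos by simp
    show "exp ((real (Suc a) - real j + 1) * ln x) = x^(Suc a) / x^(j-1)"
      unfolding r(2) left_diff_distrib exp_diff exp_of_nat_mult using xpos by simp
  qed
  show ?thesis
    unfolding HH_def x_def[symmetric] sum_distrib_left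
  proof (rule sum.cong[OF refl])
    fix j assume j: "j \<in> {1..Suc (Suc p)}"
    show "(1-q) * T p a q * (cc p (Suc (Suc p)) w j * (exp ((real (Suc a) - real j) * ln x) + exp ((real (Suc a) - real j + 1) * ln x)))
      = real (p choose a) * (dd (Suc (Suc p)) w j * T p (j-1) q)"
    proof (cases "j - 1 \<le> p")
      case True
      obtain b where b: "j = Suc b" using j by (cases j) auto
      have bp: "b \<le> p" using True b by simp
      have E: "exp ((real (Suc a) - real j) * ln x) = x^a / x^b"
              "exp ((real (Suc a) - real j + 1) * ln x) = x^(Suc a) / x^b"
        using ex[of j] b by simp_all
      have A: "(1-q) * (real (p choose a) * q^(p-a) * (1-q)^a) * (dd (Suc (Suc p)) w j * real (p choose b) * (x^a / x^b + x^(Suc a) / x^b))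
         = real (p choose a) * (dd (Suc (Suc p)) w j * (real (p choose b) * q^(p-b) * (1-q)^b))"
        by (rule alg[OF q ap bp x_def])
      show ?thesis unfolding E unfolding T_def cc_def b diff_Suc_1 using A[unfolded b] by (simp only: mult_ac)
    next
      case False
      then show ?thesis by (simp add: T_def cc_def binomial_eq_0)
    qed
  qed
qed




definition LL :: "real \<Rightarrow> real" where "LL q = ln (q / (1 - q))"
definition LA :: "real \<Rightarrow> real" where "LA u = exp u / (1 + exp u)"

lemma LA_range: "0 < LA u" "LA u < 1"
  unfolding LA_def by (auto simp: field_simps add_pos_pos)

lemma LL_LA: "LL (LA u) = u"
proof -
  have p: "0 < 1 + exp u" by (simp add: add_pos_pos)
  have h: "1 - LA u = 1 / (1 + exp u)" unfolding LA_def using p by (simp add: field_simps)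
  have "LA u / (1 - LA u) = exp u"
    unfolding h unfolding LA_def using p by simp
  then show ?thesis unfolding LL_def by simp
qed

lemma LA_LL: assumes "0 < q" "q < 1" shows "LA (LL q) = q"
proof -
  have e: "exp (LL q) = q / (1-q)" unfolding LL_def using assms by simp
  show ?thesis unfolding LA_def e using assms by (simp add: field_simps)
qed

lemma LL_mono: assumes "0 < q1" "q1 < q2" "q2 < 1" shows "LL q1 < LL q2"
proof -
  have "q1 / (1 - q1) < q2 / (1 - q2)" using assms by (simp add: field_simps)
  then show ?thesis unfolding LL_def using assms by simp
qed

lemma LA_mono: assumes "u < v" shows "LA u < LA v"
proof (rule ccontr)
  assume "\<not> LA u < LA v"
  then have "LA v \<le> LA u" by simp
  then have "LL (LA v) \<le> LL (LA u)"
    using LL_mono[of "LA v" "LA u"] LA_range by (cases "LA v = LA u") auto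
  then show False using assms by (simp add: LL_LA)
qed

theorem mainTheorem4:
  fixes n k :: nat and w :: "nat \<Rightarrow> real"
  assumes "n \<ge> 2"
    and "w 1 \<le> 1"
    and "\<forall>i\<in>{1..<n}. w (Suc i) \<le> w i"
    and "w n \<ge> 0"
    and "\<not> (\<exists>c. \<forall>q\<in>{0..1}. alloc n w q = c)"
    and "k \<in> {1..n-1}"
  shows "\<exists>m\<in>{0..1::real}.
           (\<forall>a b. 0 < a \<and> a < b \<and> b \<le> m \<and> b < 1 \<longrightarrow> Zk n w k a < Zk n w k b) \<and>
           (\<forall>a b. 0 < a \<and> m \<le> a \<and> a < b \<and> b < 1 \<longrightarrow> Zk n w k a > Zk n w k b)"
proof -
  define p where "p = n - 2"
  have n: "n = Suc (Suc p)" using assms(1) by (simp add: p_def)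
  obtain a where k: "k = Suc a" and ap: "a \<le> p" using assms(6) n by (cases k) auto
  define N where "N = Suc (Suc p)"
  have nnd: "0 \<le> dd N w j" if "j \<in> {1..N}" for j
    using that assms(3) assms(4) n unfolding dd_def N_def by (cases "j < Suc (Suc p)") auto
  have "\<exists>j0\<in>{1..Suc p}. 0 < dd N w j0"
  proof (rule ccontr)
    assume "\<not> ?thesis"
    then have z: "dd N w j = 0" if "j \<in> {1..Suc p}" for j
      using nnd[of j] that by (force simp: N_def)
    have "alloc n w q = w n" for q
    proof -
      have "alloc n w q = (\<Sum>j\<in>{1..N}. dd N w j * xk N j q)"
        unfolding alloc_def dd_def n N_def by simp
      also have "\<dots> = dd N w N * xk N N q + (\<Sum>j\<in>{1..Suc p}. dd N w j * xk N j q)"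
        unfolding N_def by (subst atLeastAtMostSuc_conv) auto
      also have "\<dots> = w n" using z unfolding N_def n by (simp add: xk_top dd_def)
      finally show ?thesis .
    qed
    then show False using assms(5) by blast
  qed
  then obtain j0 where j0: "j0 \<in> {1..Suc p}" "0 < dd N w j0" by blast
  have nnc: "0 \<le> cc p N w j" if "j \<in> {1..N}" for j
    using nnd[OF that] unfolding cc_def by simp
  have j0N: "j0 \<in> {1..N}" using j0 by (auto simp: N_def)
  have c0: "0 < cc p N w j0" using j0 unfolding cc_def by auto
  define G where "G = HH p N w k"
  define G' where "G' = HD p N w k"
  have Gpos: "0 < G u" for u unfolding G_def by (rule HH_pos[OF nnc j0N c0])
  have Gder: "(G has_real_derivative G' u) (at u)" for u unfolding G_def G'_def by (rule HH_deriv)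
  have Gcont: "continuous_on S G" for S
    using Gder by (meson DERIV_isCont continuous_at_imp_continuous_on)
  have G'mono: "u < v \<Longrightarrow> G' u < G' v" for u v unfolding G'_def by (rule HD_mono[OF nnc j0N c0])
  define Ca where "Ca = real (p choose a)"
  have Capos: "0 < Ca" using ap by (simp add: Ca_def)
  have Zform: "Zk n w k q = Ca / G (LL q)" if q: "0 < q" "q < 1" for q
  proof -
    define S where "S = (\<Sum>j\<in>{1..N}. dd N w j * T p (j-1) q)"
    have Tpos: "0 \<le> T p j q" for j using q unfolding T_def by simp
    have Spos: "0 < S" unfolding S_def
      apply (rule sum_pos2[OF _ j0N])
      using j0 q nnd Tpos by (auto simp: T_def intro!: mult_pos_pos mult_nonneg_nonneg)
    have I: "(1-q) * T p a q * G (LL q) = Ca * S"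
      unfolding G_def LL_def Ca_def S_def k N_def by (rule identity[OF q ap])
    have den: "deriv (alloc n w) q = real (Suc p) * S"
      unfolding n deriv_alloc S_def N_def sum_distrib_left by (simp add: mult_ac)
    have "Zk n w k q = (1 - q) * (real (Suc p) * T p a q) / (real (Suc p) * S)"
      unfolding Zk_def den unfolding n k deriv_xk by simp
    also have "\<dots> = (1 - q) * T p a q / S" by simp
    also have "\<dots> = Ca / G (LL q)"
      using Spos Gpos[of "LL q"] I by (simp add: frac_eq_eq mult_ac)
    finally show ?thesis .
  qed
  define A where "A = {q. 0 < q \<and> q < 1 \<and> G' (LL q) < 0}"
  define m where "m = Sup (insert 0 A)"
  have bdd: "bdd_above (insert 0 A)" unfolding A_def by (auto intro: bdd_aboveI[of _ 1])
  have m0: "0 \<le> m" unfolding m_def by (rule cSup_upper[OF _ bdd]) simp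
  have m1: "m \<le> 1" unfolding m_def by (rule cSup_least) (auto simp: A_def)
  show ?thesis
  proof (intro bexI[of _ m] conjI allI impI)
    show "m \<in> {0..1}" using m0 m1 by simp
  next
    fix a' b' :: real assume h: "0 < a' \<and> a' < b' \<and> b' \<le> m \<and> b' < 1"
    have lab: "LL a' < LL b'" using h by (intro LL_mono) auto
    have "G (LL b') < G (LL a')"
    proof (rule DERIV_neg_imp_decreasing_open[OF lab _ Gcont])
      fix x assume x: "LL a' < x" "x < LL b'"
      have "LA x < b'" using LA_mono[OF x(2)] LA_LL[of b'] h by simp
      then have "LA x < Sup (insert 0 A)" using h unfolding m_def by simp
      then obtain y where y: "y \<in> insert 0 A" "LA x < y" using less_cSup_iff[OF _ bdd] by blast
      then have yA: "y \<in> A" using LA_range[of x] by auto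
      then have "x < LL y" using LL_mono[of "LA x" y] y(2) LA_range[of x] by (auto simp: A_def LL_LA)
      then have "G' x < G' (LL y)" by (rule G'mono)
      then have "G' x < 0" using yA by (auto simp: A_def)
      then show "\<exists>y. (G has_real_derivative y) (at x) \<and> y < 0" using Gder by blast
    qed
    then show "Zk n w k a' < Zk n w k b'"
      using h Zform[of a'] Zform[of b'] Capos Gpos
      by (simp add: divide_strict_left_mono mult_pos_pos)
  next
    fix a' b' :: real assume h: "0 < a' \<and> m \<le> a' \<and> a' < b' \<and> b' < 1"
    have lab: "LL a' < LL b'" using h by (intro LL_mono) auto
    have "G (LL a') < G (LL b')"
    proof (rule DERIV_pos_imp_increasing_open[OF lab _ Gcont])
      fix x assume x: "LL a' < x" "x < LL b'"
      define e where "e = (LL a' + x) / 2"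
      have e1: "LL a' < e" "e < x" using x by (auto simp: e_def)
      have "a' < LA e" using LA_mono[OF e1(1)] LA_LL[of a'] h by simp
      then have "m < LA e" using h by simp
      have "0 \<le> G' e"
      proof (rule ccontr)
        assume "\<not> 0 \<le> G' e"
        then have "LA e \<in> A" using LA_range[of e] by (auto simp: A_def LL_LA)
        then have "LA e \<le> m" unfolding m_def by (intro cSup_upper[OF _ bdd]) simp
        then show False using \<open>m < LA e\<close> by simp
      qed
      then have "0 < G' x" using G'mono[OF e1(2)] by simp
      then show "\<exists>y. (G has_real_derivative y) (at x) \<and> 0 < y" using Gder by blast
    qed
    then show "Zk n w k a' > Zk n w k b'"
      using h Zform[of a'] Zform[of b'] Capos Gpos
      by (simp add: divide_strict_left_mono mult_pos_pos)
  qed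
qed


end
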